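(* Let $p>0$ be a prime and let $(R,\mathfrak{m},K)$ be a standard graded $K$-algebra over a field $K$ of characteristic $p$, which is $F$-finite and $F$-pure, and let $J\subseteq R$ be a homogeneous ideal. Then $p\cdot b_J(p^e)\leq b_J(p^{e+1})$ for every $e$.
   Context: A standard graded $K$-algebra: $R=\bigoplus_{i\geq0}R_i$ Noetherian, $R_0=K$, $R=K[R_1]$, $\dim_KR_1<\infty$, $\mathfrak{m}=\bigoplus_{i\geq1}R_i$. $F$-finite: $[K:K^p]<\infty$; $F$-pure: Frobenius pure (equivalently $R\to R^{1/p}$ splits). $I_e(R)=\{r\in R:\varphi(r^{1/p^e})\in\mathfrak{m}\text{ for all }\varphi\in\operatorname{Hom}_R(R^{1/p^e},R)\}$, and $b_J(p^e)=\max\{r: J^r\not\subseteq I_e(R)\}$. *)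

theory Defs
  imports Main "HOL-Computational_Algebra.Primes" "HOL-Library.Extended_Nat"
begin

(* Ideals of a commutative ring, in the type-class idiom: the ring is the whole type 'a. *)
definition is_ideal :: "'a::comm_ring_1 set \<Rightarrow> bool" where
  "is_ideal I \<longleftrightarrow> 0 \<in> I \<and> (\<forall>x\<in>I. \<forall>y\<in>I. x + y \<in> I) \<and> (\<forall>r. \<forall>x\<in>I. r * x \<in> I)"

definition ideal_gen :: "'a::comm_ring_1 set \<Rightarrow> 'a set" where
  "ideal_gen S = {x. \<exists>F c. finite F \<and> F \<subseteq> S \<and> x = (\<Sum>s\<in>F. c s * s)}"

definition ideal_pow :: "'a::comm_ring_1 set \<Rightarrow> nat \<Rightarrow> 'a set" where
  "ideal_pow J r = ideal_gen {(\<Prod>i<r. f i) | f. \<forall>i<r. f i \<in> J}"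

definition noetherian_ring :: "'a::comm_ring_1 itself \<Rightarrow> bool" where
  "noetherian_ring _ \<longleftrightarrow> (\<forall>I::'a set. is_ideal I \<longrightarrow> (\<exists>F. finite F \<and> F \<subseteq> I \<and> I = ideal_gen F))"

inductive_set subring_gen :: "'a::comm_ring_1 set \<Rightarrow> 'a set" for S where
  base: "x \<in> S \<Longrightarrow> x \<in> subring_gen S"
| one: "1 \<in> subring_gen S"
| add: "x \<in> subring_gen S \<Longrightarrow> y \<in> subring_gen S \<Longrightarrow> x + y \<in> subring_gen S"
| neg: "x \<in> subring_gen S \<Longrightarrow> - x \<in> subring_gen S"
| mult: "x \<in> subring_gen S \<Longrightarrow> y \<in> subring_gen S \<Longrightarrow> x * y \<in> subring_gen S"

(* Rg i is the degree-i piece R_i.  R = \<Oplus>_{i\<ge>0} R_i as a graded ring. *)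
definition graded_ring :: "(nat \<Rightarrow> 'a::comm_ring_1 set) \<Rightarrow> bool" where
  "graded_ring Rg \<longleftrightarrow>
     (\<forall>i. 0 \<in> Rg i \<and> (\<forall>x\<in>Rg i. \<forall>y\<in>Rg i. x + y \<in> Rg i) \<and> (\<forall>x\<in>Rg i. - x \<in> Rg i)) \<and>
     (\<forall>i j. \<forall>x\<in>Rg i. \<forall>y\<in>Rg j. x * y \<in> Rg (i + j)) \<and>
     1 \<in> Rg 0 \<and>
     (\<forall>x. \<exists>!c::nat \<Rightarrow> 'a. (\<forall>i. c i \<in> Rg i) \<and> finite {i. c i \<noteq> 0} \<and>
            x = (\<Sum>i\<in>{i. c i \<noteq> 0}. c i))"

definition hcomp :: "(nat \<Rightarrow> 'a::comm_ring_1 set) \<Rightarrow> nat \<Rightarrow> 'a \<Rightarrow> 'a" where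
  "hcomp Rg i x = (THE c::nat \<Rightarrow> 'a. (\<forall>i. c i \<in> Rg i) \<and> finite {i. c i \<noteq> 0} \<and>
            x = (\<Sum>i\<in>{i. c i \<noteq> 0}. c i)) i"

(* standard graded K-algebra: R_0 = K a field, R = K[R_1], dim_K R_1 finite, R Noetherian *)
definition standard_graded :: "(nat \<Rightarrow> 'a::comm_ring_1 set) \<Rightarrow> bool" where
  "standard_graded Rg \<longleftrightarrow> graded_ring Rg \<and>
     (0::'a) \<noteq> 1 \<and>
     (\<forall>x\<in>Rg 0. x \<noteq> 0 \<longrightarrow> (\<exists>y\<in>Rg 0. x * y = 1)) \<and>
     subring_gen (Rg 0 \<union> Rg 1) = UNIV \<and>
     (\<exists>B. finite B \<and> B \<subseteq> Rg 1 \<and>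
        (\<forall>x\<in>Rg 1. \<exists>c. (\<forall>b. c b \<in> Rg 0) \<and> x = (\<Sum>b\<in>B. c b * b))) \<and>
     noetherian_ring TYPE('a)"

(* the homogeneous maximal ideal m = \<Oplus>_{i\<ge>1} R_i *)
definition max_hom :: "(nat \<Rightarrow> 'a::comm_ring_1 set) \<Rightarrow> 'a set" where
  "max_hom Rg = {x. hcomp Rg 0 x = 0}"

definition homogeneous_ideal :: "(nat \<Rightarrow> 'a::comm_ring_1 set) \<Rightarrow> 'a set \<Rightarrow> bool" where
  "homogeneous_ideal Rg J \<longleftrightarrow> is_ideal J \<and> (\<forall>x\<in>J. \<forall>i. hcomp Rg i x \<in> J)"

(* Hom_R(R^{1/p^e}, R), with R^{1/p^e} identified with F^e_* R via r^{1/p^e} \<mapsto> r: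
   additive maps phi : R \<rightarrow> R with phi(a^{p^e} x) = a phi(x). *)
definition frob_hom :: "nat \<Rightarrow> nat \<Rightarrow> ('a::comm_ring_1 \<Rightarrow> 'a) \<Rightarrow> bool" where
  "frob_hom p e \<phi> \<longleftrightarrow> (\<forall>x y. \<phi> (x + y) = \<phi> x + \<phi> y) \<and>
                       (\<forall>a x. \<phi> (a ^ (p ^ e) * x) = a * \<phi> x)"

(* F-finite: [K : K^p] < \<infinity> *)
definition F_finite :: "nat \<Rightarrow> (nat \<Rightarrow> 'a::comm_ring_1 set) \<Rightarrow> bool" where
  "F_finite p Rg \<longleftrightarrow> (\<exists>B. finite B \<and> B \<subseteq> Rg 0 \<and>
      (\<forall>x\<in>Rg 0. \<exists>c. (\<forall>b. c b \<in> Rg 0) \<and> x = (\<Sum>b\<in>B. c b ^ p * b)))"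

(* F-pure, via the equivalent splitting of R \<rightarrow> R^{1/p} *)
definition F_pure :: "nat \<Rightarrow> 'a::comm_ring_1 itself \<Rightarrow> bool" where
  "F_pure p _ \<longleftrightarrow> (\<exists>\<phi>::'a \<Rightarrow> 'a. frob_hom p 1 \<phi> \<and> \<phi> 1 = 1)"

definition I_e :: "nat \<Rightarrow> (nat \<Rightarrow> 'a::comm_ring_1 set) \<Rightarrow> nat \<Rightarrow> 'a set" where
  "I_e p Rg e = {r. \<forall>\<phi>. frob_hom p e \<phi> \<longrightarrow> \<phi> r \<in> max_hom Rg}"

(* b_J(p^e) = max{r : J^r \<not>\<subseteq> I_e(R)}, valued in enat (\<infinity> if unbounded) *)
definition b_J :: "nat \<Rightarrow> (nat \<Rightarrow> 'a::comm_ring_1 set) \<Rightarrow> 'a set \<Rightarrow> nat \<Rightarrow> enat" where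
  "b_J p Rg J e = (SUP r\<in>{r. \<not> ideal_pow J r \<subseteq> I_e p Rg e}. enat r)"

end

theory Submission
  imports Defs
begin

lemma ig_zero: "0 \<in> ideal_gen S"
  unfolding ideal_gen_def by (rule CollectI, rule exI[of _ "{}"]) auto

lemma ig_base: "s \<in> S \<Longrightarrow> s \<in> ideal_gen S"
  unfolding ideal_gen_def by (rule CollectI, rule exI[of _ "{s}"], rule exI[of _ "\<lambda>_. 1"]) auto

lemma ig_mult: "x \<in> ideal_gen S \<Longrightarrow> r * x \<in> ideal_gen S"
proof -
  assume "x \<in> ideal_gen S"
  then obtain F c where F: "finite F" "F \<subseteq> S" "x = (\<Sum>s\<in>F. c s * s)"
    unfolding ideal_gen_def by blast
  have "r * x = (\<Sum>s\<in>F. (r * c s) * s)" using F(3) by (simp add: sum_distrib_left mult.assoc)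
  thus ?thesis using F unfolding ideal_gen_def
    by (intro CollectI exI[of _ F] exI[of _ "\<lambda>s. r * c s"]) simp
qed

lemma ig_add: "x \<in> ideal_gen S \<Longrightarrow> y \<in> ideal_gen S \<Longrightarrow> x + y \<in> ideal_gen S"
proof -
  assume "x \<in> ideal_gen S" "y \<in> ideal_gen S"
  then obtain F c F' d where F: "finite F" "F \<subseteq> S" "x = (\<Sum>s\<in>F. c s * s)"
    and F': "finite F'" "F' \<subseteq> S" "y = (\<Sum>s\<in>F'. d s * s)"
    unfolding ideal_gen_def by blast
  define c' where "c' s = (if s \<in> F then c s else 0)" for s
  define d' where "d' s = (if s \<in> F' then d s else 0)" for s
  have x: "x = (\<Sum>s\<in>F \<union> F'. c' s * s)"
    unfolding F(3) c'_def using F F' by (intro sum.mono_neutral_cong_left) auto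
  have y: "y = (\<Sum>s\<in>F \<union> F'. d' s * s)"
    unfolding F'(3) d'_def using F F' by (intro sum.mono_neutral_cong_left) auto
  have "x + y = (\<Sum>s\<in>F \<union> F'. (c' s + d' s) * s)"
    unfolding x y by (simp add: sum.distrib distrib_right)
  moreover have "finite (F \<union> F')" "F \<union> F' \<subseteq> S" using F F' by auto
  ultimately show ?thesis unfolding ideal_gen_def
    by (intro CollectI exI[of _ "F \<union> F'"] exI[of _ "\<lambda>s. c' s + d' s"]) simp
qed

lemma ig_sum: "finite A \<Longrightarrow> (\<And>i. i \<in> A \<Longrightarrow> f i \<in> ideal_gen S) \<Longrightarrow> sum f A \<in> ideal_gen S"
proof (induction A rule: finite_induct)
  case empty
  then show ?case by (simp add: ig_zero)
next
  case (insert x F)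
  then show ?case by (simp add: ig_add)
qed

lemma ig_prod:
  assumes "x \<in> ideal_gen S" "y \<in> ideal_gen T"
    and "\<And>s t. s \<in> S \<Longrightarrow> t \<in> T \<Longrightarrow> s * t \<in> U"
  shows "x * y \<in> ideal_gen U"
proof -
  obtain F c F' d where F: "finite F" "F \<subseteq> S" "x = (\<Sum>s\<in>F. c s * s)"
    and F': "finite F'" "F' \<subseteq> T" "y = (\<Sum>s\<in>F'. d s * s)"
    using assms(1,2) unfolding ideal_gen_def by blast
  have "x * y = (\<Sum>s\<in>F. \<Sum>t\<in>F'. (c s * d t) * (s * t))"
    unfolding F(3) F'(3) sum_product by (intro sum.cong refl) (simp add: algebra_simps)
  also have "\<dots> \<in> ideal_gen U"
  proof (rule ig_sum[OF F(1)])
    fix s assume s: "s \<in> F"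
    show "(\<Sum>t\<in>F'. c s * d t * (s * t)) \<in> ideal_gen U"
    proof (rule ig_sum[OF F'(1)])
      fix t assume t: "t \<in> F'"
      have "s * t \<in> U" using s t F(2) F'(2) assms(3) by blast
      then show "c s * d t * (s * t) \<in> ideal_gen U" by (rule ig_mult[OF ig_base])
    qed
  qed
  finally show ?thesis .
qed

lemma prod_concat:
  fixes f g :: "nat \<Rightarrow> 'a::comm_ring_1"
  shows "(\<Prod>i<a+b. (if i < a then f i else g (i - a))) = (\<Prod>i<a. f i) * (\<Prod>i<b. g i)"
proof (induction b)
  case 0
  have "(\<Prod>i<a. (if i < a then f i else g (i - a))) = (\<Prod>i<a. f i)"
    by (rule prod.cong) auto
  then show ?case by simp
next
  case (Suc b)
  then show ?case by (simp add: mult.assoc)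
qed

definition gens :: "'a::comm_ring_1 set \<Rightarrow> nat \<Rightarrow> 'a set" where
  "gens J r = {(\<Prod>i<r. f i) | f. \<forall>i<r. f i \<in> J}"

lemma gen_mult:
  fixes m n :: nat
  assumes "s \<in> gens J m" "t \<in> gens J n"
  shows "s * t \<in> gens J (m + n)"
proof -
  obtain f where f: "s = (\<Prod>i<m. f i)" "\<forall>i<m. f i \<in> J"
    using assms(1) unfolding gens_def by blast
  obtain g where g: "t = (\<Prod>i<n. g i)" "\<forall>i<n. g i \<in> J"
    using assms(2) unfolding gens_def by blast
  let ?h = "\<lambda>i. if i < m then f i else g (i - m)"
  have "s * t = (\<Prod>i<m+n. ?h i)" using f g prod_concat[where a=m and b=n and f=f and g=g] by simp
  moreover have "\<forall>i<m+n. ?h i \<in> J" using f g by auto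
  ultimately show ?thesis unfolding gens_def by (intro CollectI exI[of _ ?h]) simp
qed

lemma ipow_mult: "x \<in> ideal_pow J a \<Longrightarrow> y \<in> ideal_pow J b \<Longrightarrow> x * y \<in> ideal_pow J (a + b)"
  unfolding ideal_pow_def gens_def[symmetric] by (rule ig_prod, assumption, assumption, rule gen_mult)

lemma ipow_power: "g \<in> ideal_pow J r \<Longrightarrow> g ^ k \<in> ideal_pow J (k * r)"
proof (induction k)
  case 0
  have "(1::'a) \<in> gens J 0" unfolding gens_def by (auto intro: exI[of _ "\<lambda>_. 1"])
  then show ?case unfolding ideal_pow_def gens_def[symmetric] by (simp add: ig_base)
next
  case (Suc k)
  then show ?case using ipow_mult[of g J r "g^k" "k*r"] by simp
qed

lemma frob_comp:
  assumes "frob_hom p e \<phi>" "frob_hom p 1 \<psi>"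
  shows "frob_hom p (Suc e) (\<phi> \<circ> \<psi>)"
proof -
  have "(\<phi> \<circ> \<psi>) (a ^ (p ^ Suc e) * x) = a * (\<phi> \<circ> \<psi>) x" for a x
  proof -
    have "a ^ (p ^ Suc e) = (a ^ (p ^ e)) ^ p ^ 1"
      by (simp add: power_mult[symmetric] mult.commute)
    then have "\<psi> (a ^ (p ^ Suc e) * x) = a ^ (p ^ e) * \<psi> x"
      using assms(2) unfolding frob_hom_def by metis
    then show ?thesis using assms(1) unfolding frob_hom_def by simp
  qed
  then show ?thesis using assms unfolding frob_hom_def by simp
qed

lemma key:
  fixes J :: "'a::comm_ring_1 set"
  assumes "F_pure p TYPE('a::comm_ring_1)"
    and "\<not> ideal_pow J r \<subseteq> I_e p Rg e"
  shows "\<not> ideal_pow J (p * r) \<subseteq> I_e p Rg (Suc e)"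
proof -
  obtain \<psi> :: "'a \<Rightarrow> 'a" where psi: "frob_hom p 1 \<psi>" "\<psi> 1 = 1"
    using assms(1) unfolding F_pure_def by blast
  obtain g where g: "g \<in> ideal_pow J r" "g \<notin> I_e p Rg e" using assms(2) by blast
  then obtain \<phi> where phi: "frob_hom p e \<phi>" "\<phi> g \<notin> max_hom Rg"
    unfolding I_e_def by blast
  have "\<psi> (g ^ p ^ 1 * 1) = g * \<psi> 1" using psi(1) unfolding frob_hom_def by blast
  then have "\<psi> (g ^ p) = g" using psi(2) by simp
  then have "(\<phi> \<circ> \<psi>) (g ^ p) \<notin> max_hom Rg" using phi by simp
  then have "g ^ p \<notin> I_e p Rg (Suc e)"
    using frob_comp[OF phi(1) psi(1)] unfolding I_e_def by blast
  moreover have "g ^ p \<in> ideal_pow J (p * r)" using ipow_power[OF g(1)] .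
  ultimately show ?thesis by blast
qed

theorem lemma3p9:
  fixes p :: nat and Rg :: "nat \<Rightarrow> 'a::comm_ring_1 set" and J :: "'a set" and e :: nat
  assumes "prime p"
    and "of_nat p = (0::'a)"
    and "standard_graded Rg"
    and "F_finite p Rg"
    and "F_pure p TYPE('a)"
    and "homogeneous_ideal Rg J"
  shows "enat p * b_J p Rg J e \<le> b_J p Rg J (Suc e)"
proof -
  define S where "S = {r. \<not> ideal_pow J r \<subseteq> I_e p Rg e}"
  define S' where "S' = {r. \<not> ideal_pow J r \<subseteq> I_e p Rg (Suc e)}"
  have p0: "p > 0" using assms(1) prime_gt_0_nat by blast
  have SS: "r \<in> S \<Longrightarrow> p * r \<in> S'" for r
    using key[OF assms(5)] unfolding S_def S'_def by blast
  have bS: "b_J p Rg J e = Sup (enat ` S)" unfolding b_J_def S_def by simp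
  have bS': "b_J p Rg J (Suc e) = Sup (enat ` S')" unfolding b_J_def S'_def by simp
  show ?thesis
  proof (cases "S = {}")
    case True
    then show ?thesis unfolding bS by (simp add: Sup_enat_def)
  next
    case ne: False
    show ?thesis
    proof (cases "finite S")
      case True
      define m where "m = Max S"
      have m: "m \<in> S" "\<forall>r\<in>S. r \<le> m" using True ne unfolding m_def by auto
      have "Sup (enat ` S) = enat m"
        by (rule antisym) (auto intro!: Sup_least Sup_upper simp: m)
      moreover have "enat (p * m) \<le> Sup (enat ` S')"
        using SS[OF m(1)] by (auto intro: Sup_upper)
      ultimately show ?thesis unfolding bS bS' by simp
    next
      case False
      have "infinite ((\<lambda>r. p * r) ` S)" using False p0
        by (metis finite_imageD inj_onI mult_left_cancel neq0_conv)
      moreover have "(\<lambda>r. p * r) ` S \<subseteq> S'" using SS by blast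
      ultimately have "infinite S'" using finite_subset by blast
      then have "infinite (enat ` S')" by (metis finite_imageD inj_onI enat.inject)
      moreover have "enat ` S' \<noteq> {}" using \<open>infinite S'\<close> by auto
      ultimately have "Sup (enat ` S') = \<infinity>" unfolding Sup_enat_def by simp
      then show ?thesis unfolding bS' by simp
    qed
  qed
qed

end
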